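(* Consider an iteration of the $(k,k-1)$-completion with current subgraph $H$, chosen pair $(x,y)$, chosen shortest path $P_{x,y}$, chosen minimal $k$-segmentation $\mathcal{S}$, and added edges $e_1,\ldots,e_t$ (the elements of $E_k(\mathcal{S},H)$). Let $a,b$ be vertices in $\bigcup_{i=1}^t V(e_i)$ and let $s,s'$ be their respective centers. If the pair $(s,s')$ is finalized in $H$, i.e. \[ \mathrm{dist}_H(s,s')\leq k\cdot\mathrm{dist}_G(s,s')-k^2W, \] then $a,b$ are the two endpoints of a segment of $\mathcal{S}$ that has stretch at most $k$ in $H$ (i.e. $\mathrm{dist}_H(a,b)\leq k\,\mathrm{dist}_G(a,b)$).
   Context: $G=(V,E,w)$ is an undirected graph with positive edge weights, in which every edge is a shortest path between its endpoints; $\mathrm{dist}_X$ is the weighted shortest-path distance in a graph $X$, and $W=W_{\max}(G)$ is the maximum edge weight. $k\geq3$ is odd and $R=(k-1)/2$. For a shortest path $P_{x,y}=(x_0,\ldots,x_t)$ in $G$ and $H\subseteq G$, a $k$-segmentation is a sequence of index intervals $([i_0,i_1],\ldots,[i_{s-1},i_s])$ with $0=i_0<\cdots<i_s=t$ such that every segment with $i_j-i_{j-1}\geq2$ satisfies $\mathrm{dist}_H(x_{i_{j-1}},x_{i_j})\leq k\,\mathrm{dist}_G(x_{i_{j-1}},x_{i_j})$; it is minimal if no consecutive sequence of segments can be merged to give another $k$-segmentation. $E_k(\mathcal{S},H)$ is the set of edges $e=\{u,v\}$ forming length-one segments of $\mathcal{S}$ with $\mathrm{dist}_H(u,v)>k\,w(e)$.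 The $(k,k-1)$-completion starts from $H\gets H_0$, where $H_0$ is the $(2k-1)$-spanner output by the Baswana–Sen clustering algorithm with parameter $k$ (with sampled center sets $V=S_0\supseteq S_1\supseteq\cdots$), and, while some pair $x,y$ has $\mathrm{dist}_H(x,y)>k\,\mathrm{dist}_G(x,y)+(k-1)W$, picks such a pair, a shortest path $P_{x,y}$, a minimal $k$-segmentation $\mathcal{S}$ w.r.t. the current $H$, and sets $H\gets H\cup E_k(\mathcal{S},H)$. For an endpoint $a$ of an edge $e\in E_k(\mathcal{S},H)$, its center is its Baswana–Sen cluster center $s_a$ in the level-$R$ center set $S_R$; by the Baswana–Sen clustering invariant it satisfies $\mathrm{dist}_H(a,s_a)\leq R\cdot w(e)$. *)

theory Defs
  imports "HOL-Analysis.Analysis"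
begin

(* Weighted undirected graphs: an edge set  E :: 'a set set  (edges are 2-element sets)
   and a weight function  w :: 'a set => real.  A subgraph H is a subset of E with the
   same weights. *)

definition wgraph :: "'a set \<Rightarrow> 'a set set \<Rightarrow> ('a set \<Rightarrow> real) \<Rightarrow> bool" where
  "wgraph V E w \<longleftrightarrow> finite V \<and> (\<forall>e\<in>E. e \<subseteq> V \<and> card e = 2 \<and> w e > 0)"

definition walk :: "'a set set \<Rightarrow> 'a list \<Rightarrow> bool" where
  "walk E p \<longleftrightarrow> p \<noteq> [] \<and> (\<forall>i. Suc i < length p \<longrightarrow> {p ! i, p ! Suc i} \<in> E)"

definition walk_weight :: "('a set \<Rightarrow> real) \<Rightarrow> 'a list \<Rightarrow> real" where
  "walk_weight w p = (\<Sum>i<length p - 1. w {p ! i, p ! Suc i})"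

(* weighted shortest-path distance in the graph with edge set E (\<infinity> if disconnected) *)
definition gdist :: "'a set set \<Rightarrow> ('a set \<Rightarrow> real) \<Rightarrow> 'a \<Rightarrow> 'a \<Rightarrow> ereal" where
  "gdist E w u v = (INF p \<in> {p. walk E p \<and> hd p = u \<and> last p = v}. ereal (walk_weight w p))"

definition Wmax :: "'a set set \<Rightarrow> ('a set \<Rightarrow> real) \<Rightarrow> real" where
  "Wmax E w = Max (w ` E)"

definition shortest_path :: "'a set set \<Rightarrow> ('a set \<Rightarrow> real) \<Rightarrow> 'a \<Rightarrow> 'a \<Rightarrow> 'a list \<Rightarrow> bool" where
  "shortest_path E w x y P \<longleftrightarrow> walk E P \<and> hd P = x \<and> last P = y
      \<and> ereal (walk_weight w P) = gdist E w x y"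

(* A segmentation of the path P = (x_0,...,x_t) is given by its list of breakpoints
   I = [i_0, ..., i_s] with 0 = i_0 < ... < i_s = t; segment j (0 < j < length I) is the
   index interval [I!(j-1), I!j]. *)
definition k_segmentation ::
  "'a set set \<Rightarrow> 'a set set \<Rightarrow> ('a set \<Rightarrow> real) \<Rightarrow> nat \<Rightarrow> 'a list \<Rightarrow> nat list \<Rightarrow> bool" where
  "k_segmentation E H w k P I \<longleftrightarrow>
     I \<noteq> [] \<and> hd I = 0 \<and> last I = length P - 1 \<and> sorted_wrt (<) I \<and>
     (\<forall>j. 0 < j \<and> j < length I \<and> I ! j - I ! (j - 1) \<ge> 2 \<longrightarrow>
        gdist H w (P ! (I ! (j - 1))) (P ! (I ! j))
          \<le> ereal (real k) * gdist E w (P ! (I ! (j - 1))) (P ! (I ! j)))"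

(* minimal: no consecutive run of (at least two) segments j, ..., l+1 can be merged,
   i.e. removing the interior breakpoints I!j, ..., I!l never yields a k-segmentation *)
definition minimal_k_segmentation ::
  "'a set set \<Rightarrow> 'a set set \<Rightarrow> ('a set \<Rightarrow> real) \<Rightarrow> nat \<Rightarrow> 'a list \<Rightarrow> nat list \<Rightarrow> bool" where
  "minimal_k_segmentation E H w k P I \<longleftrightarrow>
     k_segmentation E H w k P I \<and>
     (\<forall>j l. 0 < j \<and> j \<le> l \<and> Suc l < length I \<longrightarrow>
        \<not> k_segmentation E H w k P (take j I @ drop (Suc l) I))"

definition Ek :: "'a set set \<Rightarrow> ('a set \<Rightarrow> real) \<Rightarrow> nat \<Rightarrow> 'a list \<Rightarrow> nat list \<Rightarrow> 'a set set" where
  "Ek H w k P I = {{P ! (I ! (j - 1)), P ! (I ! j)} | j.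
      0 < j \<and> j < length I \<and> I ! j - I ! (j - 1) = 1 \<and>
      gdist H w (P ! (I ! (j - 1))) (P ! (I ! j))
        > ereal (real k * w {P ! (I ! (j - 1)), P ! (I ! j)})}"

end

theory Submission
  imports Defs
begin

lemma ereal_INF_add_le:
  fixes f g :: "'b \<Rightarrow> ereal"
  assumes le: "\<And>p q. p\<in>A \<Longrightarrow> q\<in>B \<Longrightarrow> X \<le> f p + g q"
    and f0: "\<And>p. p\<in>A \<Longrightarrow> 0 \<le> f p" and g0: "\<And>q. q\<in>B \<Longrightarrow> 0 \<le> g q"
  shows "X \<le> (INF p\<in>A. f p) + (INF q\<in>B. g q)"
proof (cases "A = {} \<or> B = {}")
  case True
  have "(INF p\<in>A. f p) \<ge> 0" "(INF q\<in>B. g q) \<ge> 0" using f0 g0 by (auto intro: INF_greatest)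
  with True show ?thesis by (auto simp: top_ereal_def)
next
  case False
  have Bg: "(INF q\<in>B. g q) \<ge> 0" using g0 by (auto intro: INF_greatest)
  have "X \<le> (INF p\<in>A. f p + (INF q\<in>B. g q))"
  proof (rule INF_greatest)
    fix p assume p: "p \<in> A"
    have "X \<le> (INF q\<in>B. f p + g q)" using le p by (auto intro: INF_greatest)
    also have "\<dots> = f p + (INF q\<in>B. g q)"
      using False g0 f0[OF p] by (intro INF_ereal_add_right) auto
    finally show "X \<le> f p + (INF q\<in>B. g q)" .
  qed
  also have "\<dots> = (INF p\<in>A. f p) + (INF q\<in>B. g q)"
    using False f0 Bg by (intro INF_ereal_add_left) auto
  finally show ?thesis .
qed

lemma walk_Cons2: "walk E (x#y#zs) \<longleftrightarrow> {x,y} \<in> E \<and> walk E (y#zs)"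
proof
  assume "walk E (x#y#zs)"
  then have h: "\<And>i. Suc i < length (x#y#zs) \<Longrightarrow> {(x#y#zs)!i, (x#y#zs)!Suc i} \<in> E"
    unfolding walk_def by blast
  have "{x,y} \<in> E" using h[of 0] by simp
  moreover have "walk E (y#zs)" unfolding walk_def
  proof (intro conjI allI impI)
    show "y#zs \<noteq> []" by simp
    fix i assume "Suc i < length (y#zs)"
    then show "{(y#zs)!i, (y#zs)!Suc i} \<in> E" using h[of "Suc i"] by simp
  qed
  ultimately show "{x,y} \<in> E \<and> walk E (y#zs)" ..
next
  assume h: "{x,y} \<in> E \<and> walk E (y#zs)"
  then have hw: "\<And>i. Suc i < length (y#zs) \<Longrightarrow> {(y#zs)!i, (y#zs)!Suc i} \<in> E"
    unfolding walk_def by blast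
  show "walk E (x#y#zs)" unfolding walk_def
  proof (intro conjI allI impI)
    show "x#y#zs \<noteq> []" by simp
    fix i assume i: "Suc i < length (x#y#zs)"
    show "{(x#y#zs)!i, (x#y#zs)!Suc i} \<in> E"
    proof (cases i)
      case 0 then show ?thesis using h by simp
    next
      case (Suc j) then show ?thesis using hw[of j] i by simp
    qed
  qed
qed

lemma walk_single: "walk E [x]" by (simp add: walk_def)

lemma walk_weight_Cons2: "walk_weight w (x#y#zs) = w {x,y} + walk_weight w (y#zs)"
  unfolding walk_weight_def by (simp only: length_Cons diff_Suc_1 sum.lessThan_Suc_shift) simp

lemma walk_weight_single: "walk_weight w [x] = 0"
  unfolding walk_weight_def by simp

lemma walk_append:
  assumes "p \<noteq> []" "q \<noteq> []" "last p = hd q"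
  shows "walk_weight w (p @ tl q) = walk_weight w p + walk_weight w q
       \<and> (walk E p \<longrightarrow> walk E q \<longrightarrow> walk E (p @ tl q))"
  using assms
proof (induction p)
  case Nil then show ?case by simp
next
  case (Cons x p)
  show ?case
  proof (cases p)
    case Nil
    then have "x # tl q = q" using Cons.prems by (cases q) auto
    then show ?thesis using Nil by (simp add: walk_weight_single)
  next
    case (Cons y zs)
    have IH: "walk_weight w (p @ tl q) = walk_weight w p + walk_weight w q
       \<and> (walk E p \<longrightarrow> walk E q \<longrightarrow> walk E (p @ tl q))"
      using Cons.IH Cons.prems Cons by auto
    have e: "(x # p) @ tl q = x # y # (zs @ tl q)" using Cons by simp
    have e2: "p @ tl q = y # (zs @ tl q)" using Cons by simp
    show ?thesis unfolding e using IH e2 Cons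
      by (simp add: walk_weight_Cons2 walk_Cons2)
  qed
qed

lemma walk_rev:
  assumes "walk E p" shows "walk E (rev p) \<and> walk_weight w (rev p) = walk_weight w p"
  using assms
proof (induction p)
  case Nil then show ?case by (simp add: walk_def)
next
  case (Cons x p)
  show ?case
  proof (cases p)
    case Nil then show ?thesis by (simp add: walk_def walk_weight_def)
  next
    case (Cons y zs)
    have wp: "walk E p" and ex: "{x,y} \<in> E" using Cons.prems Cons walk_Cons2 by fastforce+
    have IH: "walk E (rev p) \<and> walk_weight w (rev p) = walk_weight w p" using Cons.IH wp by auto
    have lr: "last (rev p) = y" using Cons by simp
    have ap: "rev (x # p) = rev p @ tl [y, x]" by simp
    have q: "walk E [y,x]" using ex by (simp add: walk_Cons2 walk_single insert_commute)
    have "walk_weight w (rev p @ tl [y, x]) = walk_weight w (rev p) + walk_weight w [y,x]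
       \<and> (walk E (rev p) \<longrightarrow> walk E [y,x] \<longrightarrow> walk E (rev p @ tl [y,x]))"
      using lr Cons by (intro walk_append) auto
    then show ?thesis unfolding ap using IH q Cons
      by (simp add: walk_weight_Cons2 walk_weight_single insert_commute)
  qed
qed

lemma walk_weight_nonneg:
  assumes pos: "\<forall>e\<in>E. 0 < w e" and "walk E p" shows "0 \<le> walk_weight w p"
  unfolding walk_weight_def
proof (rule sum_nonneg)
  fix i assume "i \<in> {..<length p - 1}"
  then have "{p!i, p!Suc i} \<in> E" using assms(2) unfolding walk_def by auto
  then show "0 \<le> w {p!i, p!Suc i}" using pos by fastforce
qed

lemma gdist_nonneg: "\<forall>e\<in>E. 0 < w e \<Longrightarrow> 0 \<le> gdist E w u v"
  unfolding gdist_def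
proof (rule INF_greatest)
  fix p assume "\<forall>e\<in>E. 0 < w e" "p \<in> {p. walk E p \<and> hd p = u \<and> last p = v}"
  then show "0 \<le> ereal (walk_weight w p)" using walk_weight_nonneg[of E w p] by simp
qed

lemma gdist_refl: "\<forall>e\<in>E. 0 < w e \<Longrightarrow> gdist E w u u = 0"
proof -
  assume pos: "\<forall>e\<in>E. 0 < w e"
  have "gdist E w u u \<le> ereal (walk_weight w [u])"
    unfolding gdist_def by (rule INF_lower) (auto simp: walk_single)
  then show ?thesis using gdist_nonneg[OF pos, of u u] by (simp add: walk_weight_single zero_ereal_def[symmetric])
qed

lemma walk_mono: "H \<subseteq> E \<Longrightarrow> walk H p \<Longrightarrow> walk E p"
  unfolding walk_def by blast

lemma gdist_mono: "H \<subseteq> E \<Longrightarrow> gdist E w u v \<le> gdist H w u v"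
  unfolding gdist_def
proof (rule INF_superset_mono)
  assume "H \<subseteq> E"
  then show "{p. walk H p \<and> hd p = u \<and> last p = v} \<subseteq> {p. walk E p \<and> hd p = u \<and> last p = v}"
    using walk_mono[of H E] by blast
qed simp

lemma gdist_sym_le: "gdist E w u v \<le> gdist E w v u"
  unfolding gdist_def
proof (rule INF_greatest)
  fix p assume p: "p \<in> {p. walk E p \<and> hd p = v \<and> last p = u}"
  then have "rev p \<in> {p. walk E p \<and> hd p = u \<and> last p = v}"
    using walk_rev[of E p w] by (auto simp: hd_rev last_rev walk_def)
  then have "(INF p\<in>{p. walk E p \<and> hd p = u \<and> last p = v}. ereal (walk_weight w p)) \<le> ereal (walk_weight w (rev p))"
    by (rule INF_lower)
  then show "(INF p\<in>{p. walk E p \<and> hd p = u \<and> last p = v}. ereal (walk_weight w p)) \<le> ereal (walk_weight w p)"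
    using walk_rev[of E p w] p by simp
qed

lemma gdist_sym: "gdist E w u v = gdist E w v u"
  by (simp add: antisym gdist_sym_le)

lemma gdist_tri:
  assumes pos: "\<forall>e\<in>E. 0 < w e"
  shows "gdist E w u v \<le> gdist E w u m + gdist E w m v"
  unfolding gdist_def
proof (rule ereal_INF_add_le)
  fix p q assume p: "p \<in> {p. walk E p \<and> hd p = u \<and> last p = m}"
    and q: "q \<in> {p. walk E p \<and> hd p = m \<and> last p = v}"
  have ne: "p \<noteq> []" "q \<noteq> []" using p q by (auto simp: walk_def)
  have A: "walk_weight w (p @ tl q) = walk_weight w p + walk_weight w q
       \<and> (walk E p \<longrightarrow> walk E q \<longrightarrow> walk E (p @ tl q))"
    using ne p q by (intro walk_append) auto
  have w1: "walk E (p @ tl q)" using A p q by blast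
  have h1: "hd (p @ tl q) = u" using p ne by simp
  have l1: "last (p @ tl q) = v"
  proof (cases "tl q = []")
    case True
    then have "q = [hd q]" using ne by (metis list.collapse)
    then have "last q = hd q" by (metis last.simps)
    then have "v = m" using p q by auto
    then show ?thesis using True p q by simp
  next
    case False
    have "last q = last (hd q # tl q)" using ne by simp
    also have "\<dots> = last (tl q)" using False by simp
    finally show ?thesis using False q by simp
  qed
  have "p @ tl q \<in> {p. walk E p \<and> hd p = u \<and> last p = v}"
    using w1 h1 l1 by blast
  then have "(INF p\<in>{p. walk E p \<and> hd p = u \<and> last p = v}. ereal (walk_weight w p)) \<le> ereal (walk_weight w (p @ tl q))"
    by (rule INF_lower)
  then show "(INF p\<in>{p. walk E p \<and> hd p = u \<and> last p = v}. ereal (walk_weight w p)) \<le> ereal (walk_weight w p) + ereal (walk_weight w q)"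
    using A by simp
next
  fix p assume "p \<in> {p. walk E p \<and> hd p = u \<and> last p = m}"
  then show "0 \<le> ereal (walk_weight w p)" using walk_weight_nonneg[OF pos, of p] by simp
next
  fix p assume "p \<in> {p. walk E p \<and> hd p = m \<and> last p = v}"
  then show "0 \<le> ereal (walk_weight w p)" using walk_weight_nonneg[OF pos, of p] by simp
qed


lemma merge_seg:
  assumes S: "minimal_k_segmentation E H w k P I"
    and i: "i1 < i2" "i2 < length I"
    and st: "gdist H w (P!(I!i1)) (P!(I!i2)) \<le> ereal (real k) * gdist E w (P!(I!i1)) (P!(I!i2))"
  shows "\<exists>j. 0 < j \<and> j < length I \<and> {P!(I!i1), P!(I!i2)} = {P ! (I ! (j - 1)), P ! (I ! j)}"
proof (cases "i2 = Suc i1")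
  case True
  then show ?thesis using i by (intro exI[of _ i2]) auto
next
  case False
  with i have lt: "Suc i1 < i2" by auto
  have KS: "k_segmentation E H w k P I" and
    min: "\<not> k_segmentation E H w k P (take (Suc i1) I @ drop (Suc (i2 - 1)) I)"
  proof -
    show "k_segmentation E H w k P I" using S unfolding minimal_k_segmentation_def by auto
    have "0 < Suc i1 \<and> Suc i1 \<le> i2 - 1 \<and> Suc (i2 - 1) < length I" using lt i by auto
    then show "\<not> k_segmentation E H w k P (take (Suc i1) I @ drop (Suc (i2 - 1)) I)"
      using S unfolding minimal_k_segmentation_def by blast
  qed
  have KS': "I \<noteq> []" "hd I = 0" "last I = length P - 1" "sorted_wrt (<) I"
    "\<And>j. 0 < j \<Longrightarrow> j < length I \<Longrightarrow> I ! j - I ! (j - 1) \<ge> 2 \<Longrightarrow>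
        gdist H w (P ! (I ! (j - 1))) (P ! (I ! j))
          \<le> ereal (real k) * gdist E w (P ! (I ! (j - 1))) (P ! (I ! j))"
    using KS unfolding k_segmentation_def by auto
  define J where "J = take (Suc i1) I @ drop i2 I"
  define \<phi> where "\<phi> = (\<lambda>m. if m \<le> i1 then m else i2 + m - Suc i1)"
  have lenJ: "length J = Suc i1 + (length I - i2)" using i unfolding J_def by simp
  have Jnth: "J ! m = I ! (\<phi> m)" if "m < length J" for m
    using that i lenJ unfolding J_def \<phi>_def by (auto simp: nth_append nth_take nth_drop min_def)
  have phi_lt: "\<phi> m < length I" if "m < length J" for m
    using that i lenJ unfolding \<phi>_def by auto
  have phi_mono: "\<phi> m < \<phi> n" if "m < n" for m n
    using that i unfolding \<phi>_def by auto
  have "k_segmentation E H w k P J"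
    unfolding k_segmentation_def
  proof (intro conjI allI impI)
    show "J \<noteq> []" using lenJ by auto
    show "hd J = 0" using Jnth[of 0] lenJ KS'(1,2) by (subst hd_conv_nth) (auto simp: \<phi>_def hd_conv_nth)
    have "\<phi> (length J - 1) = length I - 1" using lenJ i unfolding \<phi>_def by auto
    then show "last J = length P - 1" using Jnth[of "length J - 1"] lenJ KS'
      by (subst last_conv_nth) (auto simp: last_conv_nth)
    show "sorted_wrt (<) J"
      unfolding sorted_wrt_iff_nth_less
    proof (intro allI impI)
      fix m n assume mn: "m < n" "n < length J"
      then show "J ! m < J ! n" using Jnth phi_lt phi_mono KS'(4)
        by (simp add: sorted_wrt_iff_nth_less)
    qed
    fix m assume m: "0 < m \<and> m < length J \<and> 2 \<le> J ! m - J ! (m - 1)"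
    have e1: "J ! m = I ! (\<phi> m)" "J ! (m - 1) = I ! (\<phi> (m - 1))" using m Jnth by auto
    show "gdist H w (P ! (J ! (m - 1))) (P ! (J ! m)) \<le> ereal (real k) * gdist E w (P ! (J ! (m - 1))) (P ! (J ! m))"
    proof (cases "m = Suc i1")
      case True
      then have "\<phi> m = i2" "\<phi> (m - 1) = i1" unfolding \<phi>_def by auto
      then show ?thesis using st e1 by simp
    next
      case False
      then have "\<phi> (m - 1) = \<phi> m - 1" "0 < \<phi> m" using m i unfolding \<phi>_def by auto
      then show ?thesis using e1 m KS'(5)[of "\<phi> m"] phi_lt[of m] by simp
    qed
  qed
  moreover have "Suc (i2 - 1) = i2" using lt by simp
  ultimately show ?thesis using min unfolding J_def by simp
qed

theorem lemma4p10:
  fixes V :: "'a set" and E H :: "'a set set" and w :: "'a set \<Rightarrow> real"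
    and k R :: nat and x y a b :: 'a and P :: "'a list" and I :: "nat list"
    and S_R :: "'a set" and center :: "'a \<Rightarrow> 'a"
  assumes G: "wgraph V E w"
    and edges_shortest: "\<forall>e\<in>E. \<forall>u v. e = {u, v} \<longrightarrow> gdist E w u v = ereal (w e)"
    and k: "odd k" "k \<ge> 3" and R: "R = (k - 1) div 2"
    and HG: "H \<subseteq> E"
    and pair: "gdist H w x y > ereal (real k) * gdist E w x y + ereal ((real k - 1) * Wmax E w)"
    and P: "shortest_path E w x y P"
    and S: "minimal_k_segmentation E H w k P I"
    and centers: "\<forall>e\<in>Ek H w k P I. \<forall>v\<in>e.
                    center v \<in> S_R \<and> gdist H w v (center v) \<le> ereal (real R * w e)"
    and a: "a \<in> \<Union>(Ek H w k P I)" and b: "b \<in> \<Union>(Ek H w k P I)"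
    and finalized: "gdist H w (center a) (center b)
          \<le> ereal (real k) * gdist E w (center a) (center b) - ereal ((real k)^2 * Wmax E w)"
  shows "\<exists>j. 0 < j \<and> j < length I \<and> {a, b} = {P ! (I ! (j - 1)), P ! (I ! j)} \<and>
             gdist H w a b \<le> ereal (real k) * gdist E w a b"
proof -
  have pos: "\<forall>e\<in>E. 0 < w e" using G unfolding wgraph_def by auto
  have posH: "\<forall>e\<in>H. 0 < w e" using pos HG by auto
  have finE: "finite E"
  proof -
    have "E \<subseteq> Pow V" using G unfolding wgraph_def by auto
    moreover have "finite V" using G unfolding wgraph_def by auto
    ultimately show ?thesis by (meson finite_Pow_iff finite_subset)
  qed
  define W where "W = Wmax E w"
  have lastI: "last I = length P - 1" and sortI: "sorted_wrt (<) I" and Ine: "I \<noteq> []"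
    using S unfolding minimal_k_segmentation_def k_segmentation_def by auto
  have walkP: "walk E P" using P unfolding shortest_path_def by auto
  have Pne: "P \<noteq> []" using walkP unfolding walk_def by auto
  have Ple: "I ! j \<le> length P - 1" if j: "j < length I" for j
  proof -
    have "I ! j \<le> I ! (length I - 1)"
    proof (cases "j = length I - 1")
      case False
      then have "j < length I - 1" using j by auto
      then show ?thesis using sortI Ine by (auto simp: sorted_wrt_iff_nth_less intro: less_imp_le)
    qed simp
    then show "I ! j \<le> length P - 1" using lastI Ine by (simp add: last_conv_nth)
  qed
  have EkE: "e \<in> E \<and> w e \<le> W" if "e \<in> Ek H w k P I" for e
  proof -
    from that obtain j where j: "0<j" "j < length I" "I ! j - I ! (j - 1) = 1"
        "e = {P ! (I ! (j - 1)), P ! (I ! j)}"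
      unfolding Ek_def by auto
    have s: "I!j = Suc (I!(j-1))" using j(3) by simp
    moreover have "I!j < length P" using Ple[OF j(2)] Pne by (cases P) auto
    ultimately have "e \<in> E" using walkP j(4) unfolding walk_def by auto
    then show "e \<in> E \<and> w e \<le> W" using finE unfolding W_def Wmax_def by auto
  qed
  have ptv: "\<exists>i<length I. v = P ! (I ! i)" if "v \<in> \<Union>(Ek H w k P I)" for v
  proof -
    from that obtain j where j: "0<j" "j < length I"
        "v \<in> {P ! (I ! (j - 1)), P ! (I ! j)}"
      unfolding Ek_def by auto
    then have "v = P ! (I ! (j - 1)) \<or> v = P ! (I ! j)" by auto
    then show ?thesis
    proof
      assume "v = P ! (I ! (j - 1))" then show ?thesis using j by (intro exI[of _ "j - 1"]) auto
    next
      assume "v = P ! (I ! j)" then show ?thesis using j by (intro exI[of _ j]) auto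
    qed
  qed
  obtain ea where ea: "ea \<in> Ek H w k P I" "a \<in> ea" using a by auto
  obtain eb where eb: "eb \<in> Ek H w k P I" "b \<in> eb" using b by auto
  have Wpos: "W > 0" using EkE[OF ea(1)] pos by force
  have hA: "gdist H w a (center a) \<le> ereal (real R * W)"
  proof -
    have "gdist H w a (center a) \<le> ereal (real R * w ea)" using centers ea by blast
    also have "\<dots> \<le> ereal (real R * W)" using EkE[OF ea(1)] by (simp add: mult_left_mono)
    finally show ?thesis .
  qed
  have hB: "gdist H w b (center b) \<le> ereal (real R * W)"
  proof -
    have "gdist H w b (center b) \<le> ereal (real R * w eb)" using centers eb by blast
    also have "\<dots> \<le> ereal (real R * W)" using EkE[OF eb(1)] by (simp add: mult_left_mono)
    finally show ?thesis .
  qed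
  have hB': "gdist H w (center b) b \<le> ereal (real R * W)" by (subst gdist_sym) (rule hB)
  have gA: "gdist E w (center a) a \<le> ereal (real R * W)"
    by (subst gdist_sym) (rule order_trans[OF gdist_mono[OF HG] hA])
  have gB: "gdist E w b (center b) \<le> ereal (real R * W)"
    by (rule order_trans[OF gdist_mono[OF HG] hB])
  have k2R: "2 * real R = real k - 1"
  proof -
    obtain m where m: "k = 2 * m + 1" using k(1) oddE by blast
    then have "R = m" using R by simp
    then show ?thesis using m by simp
  qed
  have main: "a \<noteq> b \<and> gdist H w a b \<le> ereal (real k) * gdist E w a b"
  proof (cases "gdist E w a b = \<infinity>")
    case True
    then have "a \<noteq> b" using gdist_refl[OF pos] by auto
    moreover have "ereal (real k) * gdist E w a b = \<infinity>" using True k by simp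
    ultimately show ?thesis by simp
  next
    case False
    then obtain d where d: "gdist E w a b = ereal d"
      using gdist_nonneg[OF pos, of a b] by (cases "gdist E w a b") auto
    have "gdist E w (center a) (center b) \<le> gdist E w (center a) a + gdist E w a (center b)"
      by (rule gdist_tri[OF pos])
    also have "\<dots> \<le> gdist E w (center a) a + (gdist E w a b + gdist E w b (center b))"
      by (intro add_left_mono gdist_tri[OF pos])
    also have "\<dots> \<le> ereal (real R * W) + (ereal d + ereal (real R * W))"
      using gA gB d by (intro add_mono) auto
    finally have gcc: "gdist E w (center a) (center b) \<le> ereal (2 * real R * W + d)"
      by (simp add: algebra_simps)
    then obtain g where g: "gdist E w (center a) (center b) = ereal g"
      using gdist_nonneg[OF pos, of "center a" "center b"]
      by (cases "gdist E w (center a) (center b)") auto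
    have gle: "g \<le> 2 * real R * W + d" using gcc g by simp
    have fin: "gdist H w (center a) (center b) \<le> ereal (real k * g - (real k)^2 * W)"
      using finalized g unfolding W_def by simp
    have "gdist H w a b \<le> gdist H w a (center a) + gdist H w (center a) b"
      by (rule gdist_tri[OF posH])
    also have "\<dots> \<le> gdist H w a (center a) + (gdist H w (center a) (center b) + gdist H w (center b) b)"
      by (intro add_left_mono gdist_tri[OF posH])
    also have "\<dots> \<le> ereal (real R * W) + (ereal (real k * g - (real k)^2 * W) + ereal (real R * W))"
      using hA hB' fin by (intro add_mono) auto
    finally have h1: "gdist H w a b \<le> ereal (2 * real R * W + real k * g - (real k)^2 * W)"
      by (simp add: algebra_simps)
    have "real k * g \<le> real k * (2 * real R * W + d)" using gle by (simp add: mult_left_mono)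
    then have "2 * real R * W + real k * g - (real k)^2 * W \<le> real k * d - W"
    proof -
      have kk: "real k = 2 * real R + 1" using k2R by simp
      have "2 * real R * W + real k * (2 * real R * W + d) - (real k)^2 * W = real k * d - W"
        unfolding kk by (simp add: algebra_simps power2_eq_square)
      then show ?thesis using \<open>real k * g \<le> real k * (2 * real R * W + d)\<close> by linarith
    qed
    with h1 have h2: "gdist H w a b \<le> ereal (real k * d - W)" by (meson order_trans ereal_less_eq(3))
    have "a \<noteq> b"
    proof
      assume "a = b"
      then have "d = 0" "gdist H w a b = 0" using d gdist_refl[OF pos] gdist_refl[OF posH] by auto
      then show False using h2 Wpos by (simp add: zero_ereal_def)
    qed
    moreover have "gdist H w a b \<le> ereal (real k) * gdist E w a b"
    proof -
      have "ereal (real k * d - W) \<le> ereal (real k) * ereal d" using Wpos by simp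
      then show ?thesis unfolding d by (rule order_trans[OF h2])
    qed
    ultimately show ?thesis by simp
  qed
  obtain ia where ia: "ia < length I" "a = P ! (I ! ia)" using ptv a by blast
  obtain ib where ib: "ib < length I" "b = P ! (I ! ib)" using ptv b by blast
  have "ia \<noteq> ib" using main ia ib by auto
  then consider "ia < ib" | "ib < ia" by linarith
  then have "\<exists>j. 0 < j \<and> j < length I \<and> {a, b} = {P ! (I ! (j - 1)), P ! (I ! j)}"
  proof cases
    case 1
    then show ?thesis using merge_seg[OF S 1 ib(1)] main ia ib by simp
  next
    case 2
    have "gdist H w b a \<le> ereal (real k) * gdist E w b a"
      using main by (simp add: gdist_sym[of H w b a] gdist_sym[of E w b a])
    then show ?thesis using merge_seg[OF S 2 ia(1)] ia ib by (simp add: insert_commute)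
  qed
  then show ?thesis using main by blast
qed

end
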